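(* Let $G$ be a connected graph with vertex set $\{u_1,\dots,u_n\}$, $n\ge2$, let $U_1,\dots,U_k$ be the non-singleton true twin equivalence classes of $G$, and let $\mathcal{H}=\{H_1,\dots,H_n\}$ be a family of graphs. Then $$\operatorname{adim}_l(G\circ\mathcal{H})=\sum_{i=1}^n\operatorname{adim}_l(H_i)+\sum_{j:\,I\cap U_j\ne\emptyset}(|I\cap U_j|-1)+\varrho'(G,\mathcal{H}).$$
   Context: All graphs are finite and simple with at least one vertex. $d_G$ is shortest-path distance ($+\infty$ between components), $d_{G,2}(x,y)=\min\{d_G(x,y),2\}$; $s$ distinguishes $x,y$ w.r.t. $d$ if $d(s,x)\ne d(s,y)$. $\operatorname{adim}_l(H)$ is the minimum size of $S\subseteq V(H)$ such that any two adjacent vertices of $H$ are distinguished w.r.t. $d_{H,2}$ by some vertex of $S$; minimum such sets are local adjacency bases. $\Phi$: class of edgeless graphs. $\mathcal{G}$: class of graphs $H$ such that every local adjacency basis $B$ of $H$ satisfies $B\subseteq N_H(v)$ for some $v\in V(H)$. True twins: $N[x]=N[y]$. Lexicographic product $G\circ\mathcal{H}$: vertex set $\bigcup_i\{u_i\}\times V(H_i)$, $(u_i,v)\sim(u_j,w)$ iff $u_iu_j\in E(G)$, or $i=j$ and $vw\in E(H_i)$. Notation: $T(G)=\bigcup_j U_j$; $V_E=\{u_i\in V(G)-T(G): H_i\in\Phi\}$; $I=\{u_i: H_i\in\mathcal{G}\}$; for each $j$ with $I\cap U_j\ne\emptyset$ choose (arbitrarily) one vertex of $I\cap U_j$ and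 let $I'_j$ be the remaining vertices of $I\cap U_j$ ($I'_j=\emptyset$ otherwise); $X_E=I-\bigcup_jI'_j$. Two vertices $u_i,u_j\in X_E$ satisfy $\mathcal{R}'$ iff $u_i\sim u_j$ and $d_{G,2}(u,u_i)=d_{G,2}(u,u_j)$ for all $u\in V(G)-(V_E\cup\{u_i,u_j\})$. $\varrho'(G,\mathcal{H})$ is the minimum $|A|$ over $A\subseteq X_E$ such that every pair $u_i,u_j\in X_E$ satisfying $\mathcal{R}'$ is distinguished by some vertex of $A$ (w.r.t. $d_{G,2}$). *)

theory Defs
  imports Main "HOL-Library.Extended_Nat"
begin

type_synonym 'a graph = "'a set \<times> ('a \<times> 'a) set"

definition verts :: "'a graph \<Rightarrow> 'a set" where "verts G = fst G"
definition edges :: "'a graph \<Rightarrow> ('a \<times> 'a) set" where "edges G = snd G"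

definition is_graph :: "'a graph \<Rightarrow> bool" where
  "is_graph G \<longleftrightarrow> finite (verts G) \<and> verts G \<noteq> {} \<and> edges G \<subseteq> verts G \<times> verts G
     \<and> sym (edges G) \<and> irrefl (edges G)"

definition adjacent :: "'a graph \<Rightarrow> 'a \<Rightarrow> 'a \<Rightarrow> bool" where
  "adjacent G x y \<longleftrightarrow> (x, y) \<in> edges G"

text \<open>Shortest-path distance; infinity if no path.\<close>
definition gdist :: "'a graph \<Rightarrow> 'a \<Rightarrow> 'a \<Rightarrow> enat" where
  "gdist G x y = Inf {enat n | n. (x, y) \<in> (edges G) ^^ n}"

definition gdist2 :: "'a graph \<Rightarrow> 'a \<Rightarrow> 'a \<Rightarrow> enat" where
  "gdist2 G x y = min (gdist G x y) 2"

definition connected_graph :: "'a graph \<Rightarrow> bool" where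
  "connected_graph G \<longleftrightarrow> (\<forall>x\<in>verts G. \<forall>y\<in>verts G. gdist G x y \<noteq> \<infinity>)"

definition open_nbhd :: "'a graph \<Rightarrow> 'a \<Rightarrow> 'a set" where
  "open_nbhd G v = {w \<in> verts G. adjacent G v w}"

definition closed_nbhd :: "'a graph \<Rightarrow> 'a \<Rightarrow> 'a set" where
  "closed_nbhd G v = insert v (open_nbhd G v)"

definition local_adj_resolving :: "'a graph \<Rightarrow> 'a set \<Rightarrow> bool" where
  "local_adj_resolving H S \<longleftrightarrow> S \<subseteq> verts H \<and>
     (\<forall>x\<in>verts H. \<forall>y\<in>verts H. adjacent H x y \<longrightarrow> (\<exists>s\<in>S. gdist2 H s x \<noteq> gdist2 H s y))"

definition adim_l :: "'a graph \<Rightarrow> nat" where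
  "adim_l H = (LEAST m. \<exists>S. local_adj_resolving H S \<and> card S = m)"

definition local_adj_basis :: "'a graph \<Rightarrow> 'a set \<Rightarrow> bool" where
  "local_adj_basis H B \<longleftrightarrow> local_adj_resolving H B \<and> card B = adim_l H"

definition edgeless :: "'a graph \<Rightarrow> bool" where
  "edgeless H \<longleftrightarrow> edges H = {}"

definition class_G :: "'a graph \<Rightarrow> bool" where
  "class_G H \<longleftrightarrow> (\<forall>B. local_adj_basis H B \<longrightarrow> (\<exists>v\<in>verts H. B \<subseteq> open_nbhd H v))"

definition twin_class :: "'a graph \<Rightarrow> 'a \<Rightarrow> 'a set" where
  "twin_class G x = {y \<in> verts G. closed_nbhd G y = closed_nbhd G x}"

definition nontrivial_twin_classes :: "'a graph \<Rightarrow> 'a set set" where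
  "nontrivial_twin_classes G = {twin_class G x | x. x \<in> verts G \<and> card (twin_class G x) \<ge> 2}"

definition T_set :: "'a graph \<Rightarrow> 'a set" where
  "T_set G = \<Union> (nontrivial_twin_classes G)"

definition lex_prod :: "'a graph \<Rightarrow> ('a \<Rightarrow> 'b graph) \<Rightarrow> ('a \<times> 'b) graph" where
  "lex_prod G H = (Sigma (verts G) (\<lambda>u. verts (H u)),
     {((u, v), (u', w)). u \<in> verts G \<and> u' \<in> verts G \<and> v \<in> verts (H u) \<and> w \<in> verts (H u') \<and>
        ((u, u') \<in> edges G \<or> (u = u' \<and> (v, w) \<in> edges (H u)))})"

definition V_E :: "'a graph \<Rightarrow> ('a \<Rightarrow> 'b graph) \<Rightarrow> 'a set" where
  "V_E G H = {u \<in> verts G - T_set G. edgeless (H u)}"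

definition I_set :: "'a graph \<Rightarrow> ('a \<Rightarrow> 'b graph) \<Rightarrow> 'a set" where
  "I_set G H = {u \<in> verts G. class_G (H u)}"

text \<open>Given a choice c U \<in> I \<inter> U for each nontrivial twin class U meeting I,
  I'_U = (I \<inter> U) - {c U}, and X_E = I - \<Union> I'_U.\<close>
definition X_E :: "'a graph \<Rightarrow> ('a \<Rightarrow> 'b graph) \<Rightarrow> ('a set \<Rightarrow> 'a) \<Rightarrow> 'a set" where
  "X_E G H c = I_set G H - (\<Union>U\<in>{U \<in> nontrivial_twin_classes G. I_set G H \<inter> U \<noteq> {}}.
                                 (I_set G H \<inter> U) - {c U})"

definition R' :: "'a graph \<Rightarrow> ('a \<Rightarrow> 'b graph) \<Rightarrow> ('a set \<Rightarrow> 'a) \<Rightarrow> 'a \<Rightarrow> 'a \<Rightarrow> bool" where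
  "R' G H c x y \<longleftrightarrow> x \<in> X_E G H c \<and> y \<in> X_E G H c \<and> adjacent G x y \<and>
     (\<forall>u \<in> verts G - (V_E G H \<union> {x, y}). gdist2 G u x = gdist2 G u y)"

definition rho' :: "'a graph \<Rightarrow> ('a \<Rightarrow> 'b graph) \<Rightarrow> ('a set \<Rightarrow> 'a) \<Rightarrow> nat" where
  "rho' G H c = (LEAST m. \<exists>A. A \<subseteq> X_E G H c \<and> card A = m \<and>
     (\<forall>x y. R' G H c x y \<longrightarrow> (\<exists>a\<in>A. gdist2 G a x \<noteq> gdist2 G a y)))"

end

theory Submission
  imports Defs
begin



definition dd :: "'a graph \<Rightarrow> 'a \<Rightarrow> 'a \<Rightarrow> enat" where
  "dd G x y = (if x = y then 0 else if (x,y) \<in> edges G then 1 else 2)"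

lemma gdist2_eq: "gdist2 G x y = dd G x y"
proof (cases "x = y")
  case True
  have "(x,y) \<in> (edges G)^^0" using True by simp
  hence "gdist G x y \<le> enat 0" unfolding gdist_def by (intro Inf_lower) blast
  hence "gdist G x y = 0" by (simp add: zero_enat_def[symmetric])
  thus ?thesis using True by (simp add: gdist2_def dd_def)
next
  case F: False
  show ?thesis
  proof (cases "(x,y) \<in> edges G")
    case True
    have "gdist G x y \<le> enat 1" unfolding gdist_def using True by (intro Inf_lower) auto
    moreover have "enat 1 \<le> gdist G x y" unfolding gdist_def
    proof (rule Inf_greatest)
      fix m assume "m \<in> {enat n |n. (x, y) \<in> edges G ^^ n}"
      then obtain n where "m = enat n" "(x,y) \<in> edges G ^^ n" by blast
      moreover have "n \<noteq> 0" using F calculation by (cases n) auto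
      ultimately show "enat 1 \<le> m" by (simp add: Suc_le_eq)
    qed
    ultimately have "gdist G x y = 1" by (simp add: one_enat_def)
    thus ?thesis using F True by (simp add: gdist2_def dd_def)
  next
    case False
    have "enat 2 \<le> gdist G x y" unfolding gdist_def
    proof (rule Inf_greatest)
      fix m assume "m \<in> {enat n |n. (x, y) \<in> edges G ^^ n}"
      then obtain n where n: "m = enat n" "(x,y) \<in> edges G ^^ n" by blast
      have "n \<noteq> 0" using F n by (cases n) auto
      moreover have "n \<noteq> 1" using False n by auto
      ultimately show "enat 2 \<le> m" using n by simp
    qed
    hence "gdist2 G x y = 2" unfolding gdist2_def by (simp add: min_def numeral_eq_enat)
    thus ?thesis using F False by (simp add: dd_def)
  qed
qed

lemma dd_sym: "sym (edges G) \<Longrightarrow> dd G x y = dd G y x"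
  unfolding dd_def by (auto dest: symD)

definition Nb :: "'a graph \<Rightarrow> 'a set \<Rightarrow> bool" where
  "Nb H S \<longleftrightarrow> (\<exists>v\<in>verts H. S \<subseteq> open_nbhd H v)"

lemma res_iff: "local_adj_resolving H S \<longleftrightarrow> S \<subseteq> verts H \<and>
     (\<forall>x\<in>verts H. \<forall>y\<in>verts H. (x,y) \<in> edges H \<longrightarrow> (\<exists>s\<in>S. dd H s x \<noteq> dd H s y))"
  unfolding local_adj_resolving_def adjacent_def gdist2_eq by simp

lemma verts_res: "is_graph H \<Longrightarrow> local_adj_resolving H (verts H)"
  unfolding res_iff is_graph_def
  by (auto simp: dd_def irrefl_def intro!: bexI)

lemma adim_le: "local_adj_resolving H S \<Longrightarrow> adim_l H \<le> card S"
  unfolding adim_l_def by (rule Least_le) blast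

lemma basis_ex: assumes "is_graph H" shows "\<exists>B. local_adj_resolving H B \<and> card B = adim_l H"
proof -
  have "\<exists>m S. local_adj_resolving H S \<and> card S = m" using verts_res[OF assms] by blast
  then show ?thesis unfolding adim_l_def by (rule exE, rule LeastI_ex) 
qed

lemma res_finite: "is_graph H \<Longrightarrow> local_adj_resolving H S \<Longrightarrow> finite S"
  unfolding res_iff is_graph_def using finite_subset by blast

lemma Nb_empty: "is_graph H \<Longrightarrow> Nb H {}"
  unfolding Nb_def is_graph_def by auto

lemma notNb_ne: "is_graph H \<Longrightarrow> \<not> Nb H S \<Longrightarrow> S \<noteq> {}"
  using Nb_empty by blast

lemma res_ne: "local_adj_resolving H S \<Longrightarrow> edges H \<noteq> {} \<Longrightarrow> is_graph H \<Longrightarrow> S \<noteq> {}"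
  unfolding res_iff is_graph_def by fastforce

lemma edgeless_Nb: "edgeless H \<Longrightarrow> Nb H S \<Longrightarrow> S = {}"
  unfolding Nb_def edgeless_def open_nbhd_def adjacent_def by auto

lemma edgeless_classG: assumes "edgeless H" "is_graph H" shows "class_G H"
  unfolding class_G_def
proof (intro allI impI)
  fix B assume B: "local_adj_basis H B"
  have "local_adj_resolving H {}" using assms unfolding res_iff edgeless_def by auto
  hence "adim_l H = 0" using adim_le by fastforce
  with B have "B = {}" using res_finite[OF assms(2)] unfolding local_adj_basis_def by auto
  thus "\<exists>v\<in>verts H. B \<subseteq> open_nbhd H v" using assms(2) unfolding is_graph_def by auto
qed

lemma notNb_ex: assumes "is_graph H"
  shows "\<exists>S. local_adj_resolving H S \<and> \<not> Nb H S \<and> card S \<le> adim_l H + (if class_G H then 1 else 0)"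
proof (cases "class_G H")
  case False
  then obtain B where B: "local_adj_basis H B" "\<forall>v\<in>verts H. \<not> B \<subseteq> open_nbhd H v"
    unfolding class_G_def by blast
  thus ?thesis unfolding Nb_def local_adj_basis_def using False by auto
next
  case CG: True
  obtain B where B: "local_adj_resolving H B" "card B = adim_l H" using basis_ex[OF assms] by blast
  show ?thesis
  proof (cases "Nb H B")
    case False thus ?thesis using B by auto
  next
    case True
    then obtain w where w: "w \<in> verts H" "B \<subseteq> open_nbhd H w" unfolding Nb_def by blast
    let ?S = "insert w B"
    have r: "local_adj_resolving H ?S" using B(1) w(1) unfolding res_iff by blast
    have c: "card ?S \<le> adim_l H + 1" using B res_finite[OF assms B(1)] by (simp add: card_insert_if)
    have "\<not> Nb H ?S"
    proof
      assume "Nb H ?S"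
      then obtain w' where w': "w' \<in> verts H" "?S \<subseteq> open_nbhd H w'" unfolding Nb_def by blast
      have e: "(w',w) \<in> edges H" using w' unfolding open_nbhd_def adjacent_def by auto
      hence "(w,w') \<in> edges H" using assms unfolding is_graph_def by (auto dest: symD)
      then obtain b where b: "b \<in> B" "dd H b w \<noteq> dd H b w'" using B(1) w w' unfolding res_iff by blast
      have "(w,b) \<in> edges H" "(w',b) \<in> edges H" using b w w' unfolding open_nbhd_def adjacent_def by auto
      moreover have "b \<noteq> w" "b \<noteq> w'" using calculation assms unfolding is_graph_def irrefl_def by auto
      moreover have "(b,w) \<in> edges H" "(b,w') \<in> edges H" using calculation assms unfolding is_graph_def by (auto dest: symD)
      ultimately show False using b unfolding dd_def by auto
    qed
    thus ?thesis using r c CG by auto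
  qed
qed




definition Sf :: "('a \<times> 'b) set \<Rightarrow> 'a \<Rightarrow> 'b set" where "Sf S u = {z. (u,z) \<in> S}"

locale pset =
  fixes G :: "'a graph" and H :: "'a \<Rightarrow> 'b graph"
  assumes gG: "is_graph G" and gH: "\<forall>u\<in>verts G. is_graph (H u)"
begin

abbreviation "P \<equiv> lex_prod G H"

lemma vertsP: "verts P = Sigma (verts G) (\<lambda>u. verts (H u))"
  unfolding lex_prod_def verts_def by simp

lemma edgesP: "((u,v),(u',w)) \<in> edges P \<longleftrightarrow> u \<in> verts G \<and> u' \<in> verts G \<and> v \<in> verts (H u) \<and> w \<in> verts (H u')
   \<and> ((u,u') \<in> edges G \<or> (u = u' \<and> (v,w) \<in> edges (H u)))"
  unfolding lex_prod_def edges_def verts_def by auto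

lemma irrG: "(u,u) \<notin> edges G" using gG unfolding is_graph_def irrefl_def by auto
lemma symG: "(u,u') \<in> edges G \<Longrightarrow> (u',u) \<in> edges G" using gG unfolding is_graph_def by (auto dest: symD)
lemma EG: "(u,u') \<in> edges G \<Longrightarrow> u \<in> verts G \<and> u' \<in> verts G" using gG unfolding is_graph_def by auto

lemma ddP: assumes "a \<in> verts G" "z \<in> verts (H a)" "u \<in> verts G" "v \<in> verts (H u)"
  shows "dd P (a,z) (u,v) = (if a \<noteq> u then dd G a u else dd (H u) z v)"
  unfolding dd_def using edgesP irrG assms by (auto simp: EG)

lemma nbhd_dd: assumes "u \<in> verts G" "z \<in> open_nbhd (H u) v" shows "dd (H u) z v = 1"
proof -
  have g: "is_graph (H u)" using gH assms by auto
  have "(v,z) \<in> edges (H u)" using assms unfolding open_nbhd_def adjacent_def by auto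
  moreover hence "z \<noteq> v" using g unfolding is_graph_def irrefl_def by auto
  moreover have "(z,v) \<in> edges (H u)" using calculation g unfolding is_graph_def by (auto dest: symD)
  ultimately show ?thesis unfolding dd_def by auto
qed

lemma not_nbhd_dd: assumes "u \<in> verts G" "z \<in> verts (H u)" "z \<notin> open_nbhd (H u) v" shows "dd (H u) z v \<noteq> 1"
proof -
  have g: "is_graph (H u)" using gH assms by auto
  have "(v,z) \<notin> edges (H u)" using assms unfolding open_nbhd_def adjacent_def by auto
  hence "(z,v) \<notin> edges (H u)" using g unfolding is_graph_def by (auto dest: symD)
  thus ?thesis unfolding dd_def by (auto simp: zero_enat_def one_enat_def numeral_eq_enat)
qed

lemma res_lower_a: assumes "local_adj_resolving P S" "u \<in> verts G"
  shows "local_adj_resolving (H u) (Sf S u)"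
  unfolding res_iff
proof (intro conjI ballI impI)
  show "Sf S u \<subseteq> verts (H u)" using assms(1) unfolding res_iff vertsP Sf_def by auto
  fix v w assume vw: "v \<in> verts (H u)" "w \<in> verts (H u)" "(v,w) \<in> edges (H u)"
  have "((u,v),(u,w)) \<in> edges P" using vw assms(2) edgesP by auto
  moreover have "(u,v) \<in> verts P" "(u,w) \<in> verts P" using vw assms(2) vertsP by auto
  ultimately obtain s where s: "s \<in> S" "dd P s (u,v) \<noteq> dd P s (u,w)" using assms(1) unfolding res_iff by blast
  obtain a z where az: "s = (a,z)" by (cases s)
  have m: "a \<in> verts G" "z \<in> verts (H a)" using s az assms(1) unfolding res_iff vertsP by auto
  have "a = u" using s az ddP[OF m assms(2) vw(1)] ddP[OF m assms(2) vw(2)] by (metis)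
  thus "\<exists>s\<in>Sf S u. dd (H u) s v \<noteq> dd (H u) s w" using s az ddP[OF m assms(2) vw(1)] ddP[OF m assms(2) vw(2)] unfolding Sf_def by auto
qed

lemma res_lower_b: assumes "local_adj_resolving P S" "(u,u') \<in> edges G"
  "Nb (H u) (Sf S u)" "Nb (H u') (Sf S u')"
  shows "\<exists>a\<in>verts G - {u,u'}. Sf S a \<noteq> {} \<and> dd G a u \<noteq> dd G a u'"
proof -
  have uu: "u \<in> verts G" "u' \<in> verts G" "u \<noteq> u'" using assms(2) EG irrG by auto
  obtain v where v: "v \<in> verts (H u)" "Sf S u \<subseteq> open_nbhd (H u) v" using assms(3) unfolding Nb_def by blast
  obtain w where w: "w \<in> verts (H u')" "Sf S u' \<subseteq> open_nbhd (H u') w" using assms(4) unfolding Nb_def by blast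
  have "((u,v),(u',w)) \<in> edges P" using v w uu assms(2) edgesP by auto
  moreover have "(u,v) \<in> verts P" "(u',w) \<in> verts P" using v w uu vertsP by auto
  ultimately obtain s where s: "s \<in> S" "dd P s (u,v) \<noteq> dd P s (u',w)" using assms(1) unfolding res_iff by blast
  obtain a z where az: "s = (a,z)" by (cases s)
  have aV: "a \<in> verts G" "z \<in> verts (H a)" using s az assms(1) unfolding res_iff vertsP by auto
  note D1 = ddP[OF aV uu(1) v(1)] and D2 = ddP[OF aV uu(2) w(1)]
  have zS: "z \<in> Sf S a" using s az unfolding Sf_def by auto
  have G1: "dd G u u' = 1" "dd G u' u = 1" using assms(2) symG uu unfolding dd_def by auto
  have "a \<noteq> u"
  proof
    assume "a = u"
    hence "dd P s (u,v) = 1" using az nbhd_dd[OF uu(1)] zS v D1 by auto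
    moreover have "dd P s (u',w) = 1" using az \<open>a = u\<close> uu G1 D2 by auto
    ultimately show False using s by simp
  qed
  moreover have "a \<noteq> u'"
  proof
    assume "a = u'"
    hence "dd P s (u',w) = 1" using az nbhd_dd[OF uu(2)] zS w D2 by auto
    moreover have "dd P s (u,v) = 1" using az \<open>a = u'\<close> uu G1 D1 by auto
    ultimately show False using s by simp
  qed
  ultimately show ?thesis using s az aV zS D1 D2 by auto
qed

lemma res_upper:
  assumes sub: "\<forall>u\<in>verts G. local_adj_resolving (H u) (F u)"
   and cond: "\<And>u u'. (u,u') \<in> edges G \<Longrightarrow> Nb (H u) (F u) \<Longrightarrow> Nb (H u') (F u') \<Longrightarrow>
               \<exists>a\<in>verts G - {u,u'}. F a \<noteq> {} \<and> dd G a u \<noteq> dd G a u'"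
  shows "local_adj_resolving P (Sigma (verts G) F)"
  unfolding res_iff
proof (intro conjI ballI impI)
  show "Sigma (verts G) F \<subseteq> verts P" using sub unfolding vertsP res_iff by auto
  fix p q assume pq: "p \<in> verts P" "q \<in> verts P" "(p,q) \<in> edges P"
  obtain u v where p: "p = (u,v)" by (cases p)
  obtain u' w where q: "q = (u',w)" by (cases q)
  have e: "u \<in> verts G" "u' \<in> verts G" "v \<in> verts (H u)" "w \<in> verts (H u')"
    "(u,u') \<in> edges G \<or> (u = u' \<and> (v,w) \<in> edges (H u))" using pq p q edgesP by auto
  show "\<exists>s\<in>Sigma (verts G) F. dd P s p \<noteq> dd P s q"
  proof (cases "u = u'")
    case True
    hence "(v,w) \<in> edges (H u)" using e irrG by auto
    then obtain z where z: "z \<in> F u" "dd (H u) z v \<noteq> dd (H u) z w" using sub e True unfolding res_iff by blast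
    have "z \<in> verts (H u)" using z sub e unfolding res_iff by auto
    thus ?thesis using e True p q z ddP[OF e(1) \<open>z \<in> verts (H u)\<close> e(1) e(3)] ddP[OF e(1) \<open>z \<in> verts (H u)\<close> e(1)] by (intro bexI[of _ "(u,z)"]) auto
  next
    case False
    hence E: "(u,u') \<in> edges G" using e by auto
    have G1: "dd G u u' = 1" "dd G u' u = 1" using E symG False unfolding dd_def by auto
    show ?thesis
    proof (cases "Nb (H u) (F u)")
      case nu: False
      then obtain z where z: "z \<in> F u" "z \<notin> open_nbhd (H u) v" using e(3) unfolding Nb_def by blast
      have "z \<in> verts (H u)" using z sub e unfolding res_iff by auto
      hence "dd (H u) z v \<noteq> 1" using not_nbhd_dd e z by auto
      thus ?thesis using z e p q False G1 ddP[OF e(1) \<open>z \<in> verts (H u)\<close> e(1) e(3)] ddP[OF e(1) \<open>z \<in> verts (H u)\<close> e(2) e(4)] by (intro bexI[of _ "(u,z)"]) auto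
    next
      case nu: True
      show ?thesis
      proof (cases "Nb (H u') (F u')")
        case False
        then obtain z where z: "z \<in> F u'" "z \<notin> open_nbhd (H u') w" using e(4) unfolding Nb_def by blast
        have "z \<in> verts (H u')" using z sub e unfolding res_iff by auto
        hence "dd (H u') z w \<noteq> 1" using not_nbhd_dd e z by auto
        thus ?thesis using z e p q \<open>u \<noteq> u'\<close> G1 ddP[OF e(2) \<open>z \<in> verts (H u')\<close> e(1) e(3)] ddP[OF e(2) \<open>z \<in> verts (H u')\<close> e(2) e(4)] by (intro bexI[of _ "(u',z)"]) auto
      next
        case True
        then obtain a where a: "a \<in> verts G - {u,u'}" "F a \<noteq> {}" "dd G a u \<noteq> dd G a u'"
          using cond[OF E nu] by blast
        then obtain z where z: "z \<in> F a" by blast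
        have aa: "a \<in> verts G" "z \<in> verts (H a)" using a z sub unfolding res_iff by auto
        thus ?thesis using a p q z ddP[OF aa e(1) e(3)] ddP[OF aa e(2) e(4)] by (intro bexI[of _ "(a,z)"]) auto
      qed
    qed
  qed
qed

end



context pset begin

definition tw :: "'a \<Rightarrow> 'a \<Rightarrow> bool" where
  "tw x y \<longleftrightarrow> x \<in> verts G \<and> y \<in> verts G \<and> closed_nbhd G x = closed_nbhd G y"

lemma tw_sym: "tw x y \<Longrightarrow> tw y x" unfolding tw_def by auto
lemma tw_trans: "tw x y \<Longrightarrow> tw y z \<Longrightarrow> tw x z" unfolding tw_def by auto
lemma tw_refl: "x \<in> verts G \<Longrightarrow> tw x x" unfolding tw_def by auto

lemma E_nb: "(x,a) \<in> edges G \<longleftrightarrow> a \<in> open_nbhd G x"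
  unfolding open_nbhd_def adjacent_def using EG by auto

lemma twin_dd: assumes "tw x y" "a \<noteq> x" "a \<noteq> y" shows "dd G a x = dd G a y"
proof -
  have "(x,a) \<in> edges G \<longleftrightarrow> (y,a) \<in> edges G"
    using assms unfolding E_nb tw_def closed_nbhd_def by blast
  hence "(a,x) \<in> edges G \<longleftrightarrow> (a,y) \<in> edges G" using symG by blast
  thus ?thesis using assms unfolding dd_def by auto
qed

lemma tw_adj: assumes "tw x y" "x \<noteq> y" shows "(x,y) \<in> edges G"
proof -
  have "y \<in> closed_nbhd G x" using assms unfolding tw_def closed_nbhd_def by auto
  thus ?thesis using assms unfolding closed_nbhd_def E_nb by auto
qed

lemma tw_dd1: assumes "tw x y" "x \<noteq> y" shows "dd G x y = 1"
  using tw_adj[OF assms] assms unfolding dd_def by auto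

lemma tw_dd2: assumes "tw x x'" "\<not> tw x y" "y \<in> verts G" shows "dd G x' y = dd G x y"
proof (cases "x = x'")
  case False
  have "y \<noteq> x" using assms tw_refl by auto
  moreover have "y \<noteq> x'" using assms by auto
  ultimately have "dd G y x = dd G y x'" using twin_dd[OF assms(1)] by auto
  thus ?thesis using dd_sym gG unfolding is_graph_def by metis
qed simp

abbreviation "M0 \<equiv> nontrivial_twin_classes G"
abbreviation "T \<equiv> T_set G"

lemma M0_E: assumes "U \<in> M0" obtains x where "x \<in> verts G" "U = twin_class G x" "card U \<ge> 2"
  using assms unfolding nontrivial_twin_classes_def by blast

lemma twin_class_tw: "y \<in> twin_class G x \<longleftrightarrow> y \<in> verts G \<and> x \<in> verts G \<and> tw y x \<or> (y \<in> verts G \<and> x \<notin> verts G \<and> closed_nbhd G y = closed_nbhd G x)"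
  unfolding twin_class_def tw_def by auto

lemma M0_tw: assumes "U \<in> M0" "y \<in> U" "z \<in> U" shows "tw y z"
proof -
  obtain x where x: "x \<in> verts G" "U = twin_class G x" using M0_E[OF assms(1)] by blast
  thus ?thesis using assms unfolding twin_class_def tw_def by auto
qed

lemma M0_sub: "U \<in> M0 \<Longrightarrow> U \<subseteq> verts G"
  by (auto elim!: M0_E simp: twin_class_def)

lemma M0_class: assumes "U \<in> M0" "y \<in> U" shows "U = twin_class G y"
proof -
  obtain x where x: "x \<in> verts G" "U = twin_class G x" using M0_E[OF assms(1)] by blast
  thus ?thesis using assms unfolding twin_class_def by auto
qed

lemma M0_disj: "U \<in> M0 \<Longrightarrow> U' \<in> M0 \<Longrightarrow> y \<in> U \<Longrightarrow> y \<in> U' \<Longrightarrow> U = U'"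
  using M0_class by metis

lemma M0_tw_mem: assumes "U \<in> M0" "y \<in> U" "tw z y" shows "z \<in> U"
  using M0_class[OF assms(1,2)] assms(3) unfolding twin_class_def tw_def by auto

lemma finV: "finite (verts G)" using gG unfolding is_graph_def by auto

lemma finM0: "finite M0"
proof -
  have "M0 \<subseteq> Pow (verts G)" using M0_sub by auto
  thus ?thesis using finV finite_subset by blast
qed

lemma notT_tw: assumes "x \<notin> T" "tw x y" shows "y = x"
proof (rule ccontr)
  assume ne: "y \<noteq> x"
  have xV: "x \<in> verts G" using assms tw_def by auto
  have "{x,y} \<subseteq> twin_class G x" using assms unfolding twin_class_def tw_def by auto
  moreover have "finite (twin_class G x)" using finV unfolding twin_class_def by auto
  ultimately have "card {x,y} \<le> card (twin_class G x)" by (rule card_mono[rotated])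
  hence "card (twin_class G x) \<ge> 2" using ne by auto
  hence "twin_class G x \<in> M0" using xV unfolding nontrivial_twin_classes_def by auto
  moreover have "x \<in> twin_class G x" using xV unfolding twin_class_def by auto
  ultimately have "x \<in> T" unfolding T_set_def by auto
  thus False using assms by auto
qed

lemma T_E: assumes "x \<in> T" obtains U where "U \<in> M0" "x \<in> U"
  using assms unfolding T_set_def by auto

lemma T_other: assumes "U \<in> M0" obtains t where "t \<in> U" "t \<noteq> y"
proof -
  have "card U \<ge> 2" using assms by (auto elim: M0_E)
  hence "\<not> U \<subseteq> {y}" using card_mono[of "{y}" U] by auto
  thus ?thesis using that by auto
qed

end

locale pset2 = pset G H for G :: "'a graph" and H :: "'a \<Rightarrow> 'b graph" +
  fixes c :: "'a set \<Rightarrow> 'a"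
  assumes hc: "\<forall>U\<in>nontrivial_twin_classes G. I_set G H \<inter> U \<noteq> {} \<longrightarrow> c U \<in> I_set G H \<inter> U"
begin

abbreviation "I \<equiv> I_set G H"
abbreviation "M \<equiv> {U \<in> M0. I \<inter> U \<noteq> {}}"
abbreviation "XE \<equiv> X_E G H c"

lemma I_V: "I \<subseteq> verts G" unfolding I_set_def by auto

lemma X1: "x \<in> XE \<Longrightarrow> x \<in> I" unfolding X_E_def by auto

lemma X2: assumes "x \<in> XE" "U \<in> M0" "x \<in> U" shows "x = c U"
  using assms X1[OF assms(1)] unfolding X_E_def by blast

lemma X3: "x \<in> I \<Longrightarrow> x \<notin> T \<Longrightarrow> x \<in> XE"
  unfolding X_E_def T_set_def by auto

lemma X4: assumes "U \<in> M" shows "c U \<in> XE"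
proof -
  have cU: "c U \<in> I \<inter> U" using hc assms by auto
  { fix U' assume U': "U' \<in> M" "c U \<in> I \<inter> U' - {c U'}"
    hence "U' = U" using M0_disj cU assms by blast
    hence False using U' by auto }
  thus ?thesis using cU unfolding X_E_def by blast
qed

lemma X5: "V_E G H \<subseteq> XE"
proof
  fix x assume "x \<in> V_E G H"
  hence "x \<in> verts G" "x \<notin> T" "edgeless (H x)" unfolding V_E_def by auto
  moreover hence "x \<in> I" using edgeless_classG[of "H x"] gH unfolding I_set_def by auto
  ultimately show "x \<in> XE" using X3 by auto
qed

lemma X6: assumes "x \<in> XE" "y \<in> XE" "tw x y" shows "x = y"
proof (rule ccontr)
  assume ne: "x \<noteq> y"
  have "x \<in> T" using notT_tw[OF _ assms(3)] ne by auto
  then obtain U where U: "U \<in> M0" "x \<in> U" by (rule T_E)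
  have "y \<in> U" using M0_tw_mem[OF U] tw_sym[OF assms(3)] by auto
  thus False using X2[OF assms(1) U] X2[OF assms(2) U(1)] ne by auto
qed

lemma finM: "finite M" using finM0 by auto

end



context pset begin
lemma twin_dd': assumes "tw x y" "a \<noteq> x" "a \<noteq> y" shows "dd G x a = dd G y a"
  using twin_dd[OF assms] dd_sym gG unfolding is_graph_def by metis
lemma ddsym: "dd G x y = dd G y x" using dd_sym gG unfolding is_graph_def by metis
end

context pset2 begin

lemma R'_iff: "R' G H c x y \<longleftrightarrow> x \<in> XE \<and> y \<in> XE \<and> (x,y) \<in> edges G \<and>
     (\<forall>u \<in> verts G - (V_E G H \<union> {x, y}). dd G u x = dd G u y)"
  unfolding R'_def adjacent_def gdist2_eq by simp

lemma rho'_ex: "\<exists>A. A \<subseteq> XE \<and> card A = rho' G H c \<and>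
     (\<forall>x y. R' G H c x y \<longrightarrow> (\<exists>a\<in>A. dd G a x \<noteq> dd G a y))"
proof -
  have "\<exists>A. A \<subseteq> XE \<and> card A = card XE \<and> (\<forall>x y. R' G H c x y \<longrightarrow> (\<exists>a\<in>A. gdist2 G a x \<noteq> gdist2 G a y))"
  proof (intro exI conjI allI impI)
    fix x y assume r: "R' G H c x y"
    hence "x \<in> XE" "(x,y) \<in> edges G" unfolding R'_iff by auto
    moreover hence "x \<noteq> y" using irrG by auto
    ultimately show "\<exists>a\<in>XE. gdist2 G a x \<noteq> gdist2 G a y" unfolding gdist2_eq dd_def by (intro bexI[of _ x]) auto
  qed auto
  hence "\<exists>m A. A \<subseteq> XE \<and> card A = m \<and> (\<forall>x y. R' G H c x y \<longrightarrow> (\<exists>a\<in>A. gdist2 G a x \<noteq> gdist2 G a y))" by blast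
  hence "\<exists>A. A \<subseteq> XE \<and> card A = rho' G H c \<and> (\<forall>x y. R' G H c x y \<longrightarrow> (\<exists>a\<in>A. gdist2 G a x \<noteq> gdist2 G a y))"
    unfolding rho'_def by (rule exE, rule LeastI_ex)
  thus ?thesis unfolding gdist2_eq .
qed

lemma finI: "finite I" using I_V finV finite_subset by blast

lemma upper: "adim_l P \<le> (\<Sum>u\<in>verts G. adim_l (H u)) + (\<Sum>U\<in>M. card (I \<inter> U) - 1) + rho' G H c"
proof -
  obtain A0 where A0: "A0 \<subseteq> XE" "card A0 = rho' G H c"
     "\<And>x y. R' G H c x y \<Longrightarrow> \<exists>a\<in>A0. dd G a x \<noteq> dd G a y" using rho'_ex by blast
  define Z where "Z = A0 \<union> (\<Union>U\<in>M. I \<inter> U - {c U})"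
  have ZI: "Z \<subseteq> I" unfolding Z_def using A0(1) X1 by auto
  have finZ: "finite Z" using ZI finI finite_subset by blast
  have cardZ: "card Z \<le> rho' G H c + (\<Sum>U\<in>M. card (I \<inter> U) - 1)"
  proof -
    have "card Z \<le> card A0 + card (\<Union>U\<in>M. I \<inter> U - {c U})" unfolding Z_def by (rule card_Un_le)
    also have "card (\<Union>U\<in>M. I \<inter> U - {c U}) \<le> (\<Sum>U\<in>M. card (I \<inter> U - {c U}))" by (rule card_UN_le[OF finM])
    also have "(\<Sum>U\<in>M. card (I \<inter> U - {c U})) = (\<Sum>U\<in>M. card (I \<inter> U) - 1)"
    proof (rule sum.cong)
      fix U assume "U \<in> M" 
      hence "c U \<in> I \<inter> U" using hc by auto
      thus "card (I \<inter> U - {c U}) = card (I \<inter> U) - 1" by simp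
    qed simp
    finally show ?thesis using A0(2) by simp
  qed
  have notZ_XE: "u \<in> XE" if "u \<in> I" "u \<notin> Z" for u
    using that unfolding Z_def X_E_def by auto
  define Bs where "Bs u = (SOME B. local_adj_resolving (H u) B \<and> card B = adim_l (H u))" for u
  define NB where "NB u = (SOME S. local_adj_resolving (H u) S \<and> \<not> Nb (H u) S \<and>
        card S \<le> adim_l (H u) + (if class_G (H u) then 1 else 0))" for u
  define F where "F u = (if u \<in> I \<and> u \<notin> Z then Bs u else NB u)" for u
  have Bs: "local_adj_resolving (H u) (Bs u) \<and> card (Bs u) = adim_l (H u)" if "u \<in> verts G" for u
    unfolding Bs_def using basis_ex[OF gH[rule_format, OF that]] by (rule someI_ex)
  have NB: "local_adj_resolving (H u) (NB u) \<and> \<not> Nb (H u) (NB u) \<and>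
        card (NB u) \<le> adim_l (H u) + (if class_G (H u) then 1 else 0)" if "u \<in> verts G" for u
    unfolding NB_def using notNb_ex[OF gH[rule_format, OF that]] by (rule someI_ex)
  have Fres: "local_adj_resolving (H u) (F u)" if "u \<in> verts G" for u
    using Bs NB that unfolding F_def by auto
  have Fne: "F u \<noteq> {} \<and> \<not> Nb (H u) (F u)" if "u \<in> verts G" "u \<notin> I \<or> u \<in> Z" for u
  proof -
    have "F u = NB u" using that(2) unfolding F_def by auto
    thus ?thesis using NB[OF that(1)] notNb_ne[OF gH[rule_format, OF that(1)]] by auto
  qed
  have Fcard: "card (F u) \<le> adim_l (H u) + of_bool (u \<in> Z)" if "u \<in> verts G" for u
  proof (cases "u \<in> I \<and> u \<notin> Z")
    case True thus ?thesis using Bs that unfolding F_def by auto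
  next
    case False
    hence "F u = NB u" unfolding F_def by auto
    moreover have "u \<notin> I \<Longrightarrow> \<not> class_G (H u)" using that unfolding I_set_def by auto
    ultimately show ?thesis using NB[OF that] False by (auto split: if_splits)
  qed
  have resP: "local_adj_resolving P (Sigma (verts G) F)"
  proof (rule res_upper)
    show "\<forall>u\<in>verts G. local_adj_resolving (H u) (F u)" using Fres by auto
  next
    fix u u' assume E: "(u,u') \<in> edges G" and N: "Nb (H u) (F u)" "Nb (H u') (F u')"
    have V: "u \<in> verts G" "u' \<in> verts G" "u \<noteq> u'" using E EG irrG by auto
    have IZ: "u \<in> I" "u \<notin> Z" "u' \<in> I" "u' \<notin> Z" using Fne V N by auto
    have XX: "u \<in> XE" "u' \<in> XE" using notZ_XE IZ by auto
    show "\<exists>a\<in>verts G - {u,u'}. F a \<noteq> {} \<and> dd G a u \<noteq> dd G a u'"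
    proof (cases "R' G H c u u'")
      case True
      then obtain a where a: "a \<in> A0" "dd G a u \<noteq> dd G a u'" using A0(3) by blast
      have "a \<in> Z" "a \<in> verts G" using a A0(1) X1 I_V unfolding Z_def by auto
      moreover hence "F a \<noteq> {}" using Fne by auto
      ultimately show ?thesis using a IZ by (intro bexI[of _ a]) auto
    next
      case False
      then obtain w where w: "w \<in> verts G" "w \<notin> V_E G H" "w \<noteq> u" "w \<noteq> u'" "dd G w u \<noteq> dd G w u'"
        using XX E unfolding R'_iff by blast
      show ?thesis
      proof (cases "edgeless (H w)")
        case False
        hence "F w \<noteq> {}" using res_ne[OF Fres[OF w(1)]] gH w(1) unfolding edgeless_def by auto
        thus ?thesis using w by (intro bexI[of _ w]) auto
      next
        case True
        hence wT: "w \<in> T" "w \<in> I" using w edgeless_classG[of "H w"] gH unfolding V_E_def I_set_def by auto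
        then obtain U where U: "U \<in> M0" "w \<in> U" by (elim T_E)
        have UM: "U \<in> M" using U wT by auto
        show ?thesis
        proof (cases "w = c U")
          case False
          hence "w \<in> Z" unfolding Z_def using UM U wT by auto
          hence "F w \<noteq> {}" using Fne w by auto
          thus ?thesis using w by (intro bexI[of _ w]) auto
        next
          case True
          obtain t where t: "t \<in> U" "t \<noteq> w" by (rule T_other[OF U(1)])
          have tw: "tw t w" using M0_tw U t by auto
          have tV: "t \<in> verts G" using tw unfolding tw_def by auto
          have tu: "t \<noteq> u"
          proof
            assume "t = u"
            hence "dd G w u = 1" using tw_dd1[OF tw_sym[OF tw]] t by auto
            moreover have "dd G u u' = dd G w u'" using twin_dd'[OF tw] \<open>t = u\<close> V w by auto
            moreover have "dd G u u' = 1" using E V unfolding dd_def by auto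
            ultimately show False using w by auto
          qed
          have tu': "t \<noteq> u'"
          proof
            assume "t = u'"
            hence "dd G w u' = 1" using tw_dd1[OF tw_sym[OF tw]] t by auto
            moreover have "dd G u' u = dd G w u" using twin_dd'[OF tw] \<open>t = u'\<close> V w by auto
            moreover have "dd G u' u = 1" using E V symG unfolding dd_def by auto
            ultimately show False using w by auto
          qed
          have "t \<notin> I \<or> t \<in> Z" unfolding Z_def using UM t True by auto
          hence "F t \<noteq> {}" using Fne tV by auto
          moreover have "dd G t u = dd G w u" "dd G t u' = dd G w u'"
            using twin_dd'[OF tw] tu tu' w by auto
          ultimately show ?thesis using tV tu tu' w by (intro bexI[of _ t]) auto
        qed
      qed
    qed
  qed
  have finF: "\<forall>u\<in>verts G. finite (F u)" using Fres res_finite gH by blast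
  have "adim_l P \<le> card (Sigma (verts G) F)" by (rule adim_le[OF resP])
  also have "\<dots> = (\<Sum>u\<in>verts G. card (F u))" using finV finF by simp
  also have "\<dots> \<le> (\<Sum>u\<in>verts G. adim_l (H u) + of_bool (u \<in> Z))" by (rule sum_mono) (use Fcard in auto)
  also have "\<dots> = (\<Sum>u\<in>verts G. adim_l (H u)) + card (verts G \<inter> {u. u \<in> Z})"
    using finV by (simp add: sum.distrib)
  also have "card (verts G \<inter> {u. u \<in> Z}) = card Z" proof -
    have "verts G \<inter> {u. u \<in> Z} = Z" using ZI I_V by auto
    thus ?thesis by simp
  qed
  finally show ?thesis using cardZ by simp
qed

end



context pset2 begin

lemma resP_all: "local_adj_resolving P (verts P)"
proof -
  have "local_adj_resolving P (Sigma (verts G) (\<lambda>u. verts (H u)))"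
  proof (rule res_upper)
    show "\<forall>u\<in>verts G. local_adj_resolving (H u) (verts (H u))" using gH by (simp add: verts_res)
  next
    fix u u' assume "(u,u') \<in> edges G" "Nb (H u) (verts (H u))"
    then obtain v where v: "v \<in> verts (H u)" "verts (H u) \<subseteq> open_nbhd (H u) v" using EG unfolding Nb_def by blast
    hence "(v,v) \<in> edges (H u)" unfolding open_nbhd_def adjacent_def by auto
    moreover have "is_graph (H u)" using gH EG \<open>(u,u') \<in> edges G\<close> by auto
    ultimately have False unfolding is_graph_def irrefl_def by auto
    thus "\<exists>a\<in>verts G - {u, u'}. verts (H a) \<noteq> {} \<and> dd G a u \<noteq> dd G a u'" by blast
  qed
  thus ?thesis using vertsP by simp
qed

lemma lower: "(\<Sum>u\<in>verts G. adim_l (H u)) + (\<Sum>U\<in>M. card (I \<inter> U) - 1) + rho' G H c \<le> adim_l P"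
proof -
  obtain S where S: "local_adj_resolving P S" "card S = adim_l P"
  proof -
    have "\<exists>m S. local_adj_resolving P S \<and> card S = m" using resP_all by blast
    hence "\<exists>S. local_adj_resolving P S \<and> card S = adim_l P" unfolding adim_l_def by (rule exE, rule LeastI_ex)
    thus ?thesis using that by blast
  qed
  define SF where "SF = Sf S"
  have SSig: "S = Sigma (verts G) SF" using S(1) unfolding res_iff vertsP SF_def Sf_def by auto
  have SFres: "local_adj_resolving (H u) (SF u)" if "u \<in> verts G" for u
    using res_lower_a[OF S(1) that] SF_def by simp
  have finSF: "\<forall>u\<in>verts G. finite (SF u)" using SFres res_finite gH by blast
  define Z where "Z = {u \<in> I. \<not> Nb (H u) (SF u)}"
  have ZI: "Z \<subseteq> I" unfolding Z_def by auto
  have finZ: "finite Z" using ZI finI finite_subset by blast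
  have NbZ: "Nb (H u) (SF u)" if "u \<in> I" "u \<notin> Z" for u using that unfolding Z_def by auto
  have cons: "\<exists>a\<in>verts G - {x,y}. SF a \<noteq> {} \<and> dd G a x \<noteq> dd G a y"
    if "(x,y) \<in> edges G" "x \<in> I" "x \<notin> Z" "y \<in> I" "y \<notin> Z" for x y
    using res_lower_b[OF S(1) that(1)] NbZ that unfolding SF_def by auto
  have SFcard: "adim_l (H u) + of_bool (u \<in> Z) \<le> card (SF u)" if "u \<in> verts G" for u
  proof -
    have le: "adim_l (H u) \<le> card (SF u)" using adim_le[OF SFres[OF that]] .
    show ?thesis
    proof (cases "u \<in> Z")
      case True
      have "card (SF u) \<noteq> adim_l (H u)"
      proof
        assume "card (SF u) = adim_l (H u)"
        hence "local_adj_basis (H u) (SF u)" using SFres that unfolding local_adj_basis_def by auto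
        moreover have "class_G (H u)" using True ZI unfolding I_set_def by auto
        ultimately have "Nb (H u) (SF u)" unfolding class_G_def Nb_def by blast
        thus False using True unfolding Z_def by auto
      qed
      thus ?thesis using le True by auto
    qed (use le in auto)
  qed
  have step1: "(\<Sum>u\<in>verts G. adim_l (H u)) + card Z \<le> adim_l P"
  proof -
    have "(\<Sum>u\<in>verts G. adim_l (H u)) + card Z = (\<Sum>u\<in>verts G. adim_l (H u) + of_bool (u \<in> Z))"
    proof -
      have "verts G \<inter> {u. u \<in> Z} = Z" using ZI I_V by auto
      thus ?thesis using finV by (simp add: sum.distrib)
    qed
    also have "\<dots> \<le> (\<Sum>u\<in>verts G. card (SF u))" by (rule sum_mono) (use SFcard in auto)
    also have "\<dots> = card S" using SSig finV finSF by simp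
    finally show ?thesis using S(2) by simp
  qed
  have tcl: "card (I \<inter> U - Z) \<le> 1" if "U \<in> M0" for U
  proof -
    have "finite (I \<inter> U - Z)" using finI by auto
    moreover have "\<forall>x\<in>I \<inter> U - Z. \<forall>y\<in>I \<inter> U - Z. x = y"
    proof (intro ballI, rule ccontr)
      fix x y assume xy: "x \<in> I \<inter> U - Z" "y \<in> I \<inter> U - Z" "x \<noteq> y"
      have t: "tw x y" using M0_tw that xy by auto
      then obtain a where a: "a \<in> verts G - {x,y}" "dd G a x \<noteq> dd G a y"
        using cons[OF tw_adj[OF t xy(3)]] xy by blast
      thus False using twin_dd[OF t] by auto
    qed
    ultimately show ?thesis by (simp add: card_le_Suc0_iff_eq)
  qed
  define A where "A = {x \<in> XE. I \<inter> twin_class G x \<subseteq> Z}"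
  have AX: "A \<subseteq> XE" unfolding A_def by auto
  have "A \<subseteq> I" using AX X1 by auto
  hence finA: "finite A" using finI by (rule finite_subset)
  have rhoA: "rho' G H c \<le> card A"
  proof -
    have "\<forall>x y. R' G H c x y \<longrightarrow> (\<exists>a\<in>A. gdist2 G a x \<noteq> gdist2 G a y)"
    proof (intro allI impI)
      fix x y assume R: "R' G H c x y"
      hence RR: "x \<in> XE" "y \<in> XE" "(x,y) \<in> edges G"
         "\<And>w. w \<in> verts G \<Longrightarrow> w \<notin> V_E G H \<Longrightarrow> w \<noteq> x \<Longrightarrow> w \<noteq> y \<Longrightarrow> dd G w x = dd G w y"
        unfolding R'_iff by auto
      have xyV: "x \<in> verts G" "y \<in> verts G" "x \<noteq> y" using RR(3) EG irrG by auto
      have dxy: "dd G x y = 1" "dd G y x = 1" using RR(3) symG xyV unfolding dd_def by auto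
      show "\<exists>a\<in>A. gdist2 G a x \<noteq> gdist2 G a y"
      proof (cases "x \<in> A")
        case True thus ?thesis using dxy unfolding gdist2_eq by (intro bexI[of _ x]) (auto simp: dd_def)
      next
        case xA: False
        show ?thesis
        proof (cases "y \<in> A")
          case True thus ?thesis using dxy xyV unfolding gdist2_eq by (intro bexI[of _ y]) (auto simp: dd_def)
        next
          case yA: False
          obtain rx where rx: "rx \<in> I" "rx \<in> twin_class G x" "rx \<notin> Z" using xA RR(1) unfolding A_def by auto
          obtain ry where ry: "ry \<in> I" "ry \<in> twin_class G y" "ry \<notin> Z" using yA RR(2) unfolding A_def by auto
          have trx: "tw x rx" "tw y ry" using rx ry xyV unfolding twin_class_def tw_def by auto
          have ntw: "\<not> tw x y" using X6[OF RR(1,2)] xyV by auto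
          have ntw2: "\<not> tw x ry" using ntw tw_trans tw_sym trx by blast
          have ntw3: "\<not> tw y x" using ntw tw_sym by blast
          have rV: "rx \<in> verts G" "ry \<in> verts G" using trx unfolding tw_def by auto
          have "dd G rx ry = dd G x ry" using tw_dd2[OF trx(1) ntw2 rV(2)] .
          also have "\<dots> = dd G ry x" using ddsym .
          also have "\<dots> = dd G y x" using tw_dd2[OF trx(2) ntw3 xyV(1)] .
          finally have d1: "dd G rx ry = 1" using dxy by simp
          hence E: "(rx,ry) \<in> edges G" unfolding dd_def by (auto split: if_splits)
          obtain a where a: "a \<in> verts G" "a \<noteq> rx" "a \<noteq> ry" "SF a \<noteq> {}" "dd G a rx \<noteq> dd G a ry"
            using cons[OF E rx(1,3) ry(1,3)] by blast
          have ax: "dd G a x = dd G a rx" if "a \<noteq> x" using twin_dd[OF trx(1)] that a by auto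
          have ay: "dd G a y = dd G a ry" if "a \<noteq> y" using twin_dd[OF trx(2)] that a by auto
          have aVE: "a \<in> V_E G H"
          proof (rule ccontr)
            assume nVE: "a \<notin> V_E G H"
            have "dd G a rx = dd G a ry"
            proof (cases "a = x")
              case True
              hence "x \<noteq> rx" using a by auto
              hence "dd G x rx = 1" using tw_dd1[OF trx(1)] by auto
              moreover have "x \<noteq> ry" using ntw2 tw_refl xyV by auto
              hence "dd G x ry = dd G x y" using twin_dd[OF trx(2)] xyV by auto
              ultimately show ?thesis using True dxy by simp
            next
              case F1: False
              show ?thesis
              proof (cases "a = y")
                case True
                hence "y \<noteq> ry" using a by auto
                hence "dd G y ry = 1" using tw_dd1[OF trx(2)] by auto
                moreover have "y \<noteq> rx" using ntw2 trx tw_sym tw_trans ntw by blast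
                hence "dd G y rx = dd G y x" using twin_dd[OF trx(1)] xyV by auto
                ultimately show ?thesis using True dxy by simp
              next
                case False
                thus ?thesis using ax ay RR(4)[OF a(1) nVE F1 False] F1 by simp
              qed
            qed
            thus False using a by simp
          qed
          have aT: "a \<notin> T" "edgeless (H a)" using aVE unfolding V_E_def by auto
          have "a \<in> I" using aT edgeless_classG[of "H a"] gH a(1) unfolding I_set_def by auto
          moreover have "\<not> Nb (H a) (SF a)" using edgeless_Nb[OF aT(2)] a(4) by auto
          ultimately have aZ: "a \<in> Z" unfolding Z_def by auto
          have "I \<inter> twin_class G a \<subseteq> Z"
          proof
            fix b assume "b \<in> I \<inter> twin_class G a"
            hence "tw a b" using a(1) unfolding twin_class_def tw_def by auto
            thus "b \<in> Z" using notT_tw[OF aT(1)] aZ by auto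
          qed
          hence aA: "a \<in> A" using X5 aVE unfolding A_def by auto
          have "a \<noteq> x"
          proof
            assume "a = x"
            hence "x \<noteq> rx" using a by auto
            hence "x \<in> T" using notT_tw trx(1) by metis
            thus False using aT \<open>a = x\<close> by auto
          qed
          moreover have "a \<noteq> y"
          proof
            assume "a = y"
            hence "y \<noteq> ry" using a by auto
            hence "y \<in> T" using notT_tw trx(2) by metis
            thus False using aT \<open>a = y\<close> by auto
          qed
          ultimately have "dd G a x \<noteq> dd G a y" using ax ay a by simp
          thus ?thesis using aA unfolding gdist2_eq by blast
        qed
      qed
    qed
    hence "\<exists>A'. A' \<subseteq> XE \<and> card A' = card A \<and> (\<forall>x y. R' G H c x y \<longrightarrow> (\<exists>a\<in>A'. gdist2 G a x \<noteq> gdist2 G a y))"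
      using AX by blast
    thus ?thesis unfolding rho'_def by (intro Least_le) blast
  qed
  have ZT: "card (Z - T) + (\<Sum>U\<in>M. card (Z \<inter> U)) \<le> card Z"
  proof -
    have disj: "\<forall>U\<in>M. \<forall>U'\<in>M. U \<noteq> U' \<longrightarrow> (Z \<inter> U) \<inter> (Z \<inter> U') = {}" using M0_disj by blast
    have "card (\<Union>U\<in>M. Z \<inter> U) = (\<Sum>U\<in>M. card (Z \<inter> U))"
      using card_UN_disjoint[OF finM _ disj] finZ by auto
    moreover have "(Z - T) \<inter> (\<Union>U\<in>M. Z \<inter> U) = {}" unfolding T_set_def by auto
    moreover have "finite (\<Union>U\<in>M. Z \<inter> U)" using finZ by (rule finite_subset[rotated]) auto
    moreover have "finite (Z - T)" using finZ by auto
    ultimately have "card (Z - T) + (\<Sum>U\<in>M. card (Z \<inter> U)) = card ((Z - T) \<union> (\<Union>U\<in>M. Z \<inter> U))"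
      by (simp add: card_Un_disjoint)
    also have "\<dots> \<le> card Z" by (rule card_mono[OF finZ]) auto
    finally show ?thesis .
  qed
  have perU: "card (I \<inter> U) - 1 + of_bool (I \<inter> U \<subseteq> Z) \<le> card (Z \<inter> U)" if U: "U \<in> M" for U
  proof (cases "I \<inter> U \<subseteq> Z")
    case True
    hence "Z \<inter> U = I \<inter> U" using ZI by auto
    moreover have "card (I \<inter> U) \<ge> 1" using U finI by (simp add: Suc_le_eq card_gt_0_iff)
    ultimately show ?thesis using True by simp
  next
    case False
    have "I \<inter> U \<subseteq> (Z \<inter> U) \<union> (I \<inter> U - Z)" by auto
    hence "card (I \<inter> U) \<le> card ((Z \<inter> U) \<union> (I \<inter> U - Z))" using finZ finI by (intro card_mono) auto
    also have "\<dots> \<le> card (Z \<inter> U) + card (I \<inter> U - Z)" by (rule card_Un_le)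
    finally show ?thesis using tcl[of U] U False by simp
  qed
  have sumU: "(\<Sum>U\<in>M. card (I \<inter> U) - 1) + card (M \<inter> {U. I \<inter> U \<subseteq> Z}) \<le> (\<Sum>U\<in>M. card (Z \<inter> U))"
  proof -
    have "(\<Sum>U\<in>M. card (I \<inter> U) - 1) + card (M \<inter> {U. I \<inter> U \<subseteq> Z})
        = (\<Sum>U\<in>M. card (I \<inter> U) - 1 + of_bool (I \<inter> U \<subseteq> Z))"
      using finM by (simp add: sum.distrib)
    also have "\<dots> \<le> (\<Sum>U\<in>M. card (Z \<inter> U))" by (rule sum_mono) (use perU in auto)
    finally show ?thesis .
  qed
  have Acard: "card A \<le> card (Z - T) + card (M \<inter> {U. I \<inter> U \<subseteq> Z})"
  proof -
    have "A \<subseteq> (Z - T) \<union> c ` (M \<inter> {U. I \<inter> U \<subseteq> Z})"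
    proof
      fix x assume xA: "x \<in> A"
      hence xX: "x \<in> XE" "x \<in> I" "x \<in> verts G" "I \<inter> twin_class G x \<subseteq> Z" using X1 I_V unfolding A_def by auto
      show "x \<in> (Z - T) \<union> c ` (M \<inter> {U. I \<inter> U \<subseteq> Z})"
      proof (cases "x \<in> T")
        case False
        have "x \<in> twin_class G x" using xX unfolding twin_class_def by auto
        thus ?thesis using False xX by auto
      next
        case True
        then obtain U where U: "U \<in> M0" "x \<in> U" by (rule T_E)
        have "x = c U" using X2[OF xX(1) U] .
        moreover have "U = twin_class G x" using M0_class[OF U] .
        ultimately show ?thesis using U xX by auto
      qed
    qed
    hence "card A \<le> card ((Z - T) \<union> c ` (M \<inter> {U. I \<inter> U \<subseteq> Z}))"
      using finZ finM by (intro card_mono) auto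
    also have "\<dots> \<le> card (Z - T) + card (c ` (M \<inter> {U. I \<inter> U \<subseteq> Z}))" by (rule card_Un_le)
    also have "card (c ` (M \<inter> {U. I \<inter> U \<subseteq> Z})) \<le> card (M \<inter> {U. I \<inter> U \<subseteq> Z})" by (rule card_image_le) (use finM in auto)
    finally show ?thesis by simp
  qed
  show ?thesis using step1 ZT sumU Acard rhoA by linarith
qed
end


theorem theorem7:
  fixes G :: "'a graph" and H :: "'a \<Rightarrow> 'b graph" and c :: "'a set \<Rightarrow> 'a"
  assumes "is_graph G" and "connected_graph G" and "card (verts G) \<ge> 2"
    and "\<forall>u\<in>verts G. is_graph (H u)"
    and "\<forall>U\<in>nontrivial_twin_classes G. I_set G H \<inter> U \<noteq> {} \<longrightarrow> c U \<in> I_set G H \<inter> U"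
  shows "adim_l (lex_prod G H) =
           (\<Sum>u\<in>verts G. adim_l (H u))
         + (\<Sum>U\<in>{U \<in> nontrivial_twin_classes G. I_set G H \<inter> U \<noteq> {}}. card (I_set G H \<inter> U) - 1)
         + rho' G H c"
proof -
  interpret pset2 G H c using assms by unfold_locales auto
  show ?thesis using upper lower by linarith
qed

end
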